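(* Let $\alpha>0$, $\varepsilon>0$, and let $K$ be the set of all items that are ever added to the tentative solution $I$ during Phase A and Phase B (including items that are later removed by an exchange). Then \[ \mathbb E[w(K\setminus D)]\ \ge\ (1-\varepsilon)\,\mathbb E[w(K)], \] where the expectation is over the random sampling in Phase A.
   Context: Setting. $V$ is a finite ground set of $n=|V|$ items arriving one at a time in a fixed stream order. $f:2^V\to\mathbb R_{\ge 0}$ is non-decreasing and submodular with $f(\emptyset)=0$; write $f(v\mid X)=f(X\cup\{v\})-f(X)$. $\mathcal M=\mathcal M_1\cap\dots\cap\mathcal M_p$ is the intersection of $p$ matroids $\mathcal M_1,\dots,\mathcal M_p$ on $V$ (a "$p$-matroid"); a set is feasible if it lies in $\mathcal M$; the rank is $r=\max_{S\in\mathcal M}|S|$. $d\ge 0$ is an integer and $D\subseteq V$ is a deletion set with $|D|\le d$, fixed in advance and independent of the algorithm's random bits (static adversary). Weights. Items receive a weight $w(v)\ge 0$ when processed, as specified below; for a set $S$, $w(S)=\sum_{u\in S}w(u)$ (with $w(\emptyset)=0$). Exchange$(v,I)$: for each $j\in[p]$ with $I\cup\{v\}\notin\mathcal M_j$, let $u_j\in\arg\min\{w(u): u\in I,\ (I\cup\{v\})\setminus\{u\}\in\mathcal M_j\}$; return the set $\{u_j\}$ of these items (empty if $I\cup\{v\}\in\mathcal M$). Phase A (streaming, parameters $\varepsilon,\alpha>0$): initialize $I=\emptyset$, $C=\emptyset$. For each arriving item $v'$ of $V$ in stream order: (1) $C\gets C\cup\{v'\}$; (2) $C\gets\{v\in C: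 f(v\mid I)\ge (1+\alpha)\,w(\mathrm{Exchange}(v,I))\}$; (3) if $|C|\ge d/\varepsilon$, sample one item $v\in C$ at random with probability proportional to $1/f(v\mid I)$, set $w(v)=f(v\mid I)$, and set $I\gets (I\cup\{v\})\setminus \mathrm{Exchange}(v,I)$. At the end output $S_1:=I$ and the buffer $C$. The coreset is $R=S_1\cup C$. Phase B (after deletions, parameter $\alpha$): start with $I=S_1$. For each $v\in C\setminus D$: set $w(v)=f(v\mid I)$, $S=\mathrm{Exchange}(v,I)$, and if $w(v)\ge(1+\alpha)w(S)$ set $I\gets(I\cup\{v\})\setminus S$. Let $S_2$ be the final $I$; output $\mathrm{ALG}=S_2\setminus D$. *)

theory Defs
  imports "HOL-Probability.Probability_Mass_Function"
begin

definition matroid :: "'a set \<Rightarrow> ('a set \<Rightarrow> bool) \<Rightarrow> bool" where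
  "matroid V M \<longleftrightarrow> finite V \<and> (\<forall>S. M S \<longrightarrow> S \<subseteq> V) \<and> M {} \<and>
     (\<forall>A B. M B \<longrightarrow> A \<subseteq> B \<longrightarrow> M A) \<and>
     (\<forall>A B. M A \<longrightarrow> M B \<longrightarrow> card A < card B \<longrightarrow> (\<exists>x\<in>B - A. M (insert x A)))"

definition monotone_submodular :: "'a set \<Rightarrow> ('a set \<Rightarrow> real) \<Rightarrow> bool" where
  "monotone_submodular V f \<longleftrightarrow> f {} = 0 \<and> (\<forall>S. S \<subseteq> V \<longrightarrow> f S \<ge> 0) \<and>
     (\<forall>A B. A \<subseteq> B \<longrightarrow> B \<subseteq> V \<longrightarrow> f A \<le> f B) \<and>
     (\<forall>A B v. A \<subseteq> B \<longrightarrow> B \<subseteq> V \<longrightarrow> v \<in> V - B \<longrightarrow>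
        f (insert v A) - f A \<ge> f (insert v B) - f B)"

definition marg :: "('a set \<Rightarrow> real) \<Rightarrow> 'a \<Rightarrow> 'a set \<Rightarrow> real" where
  "marg f v X = f (insert v X) - f X"

(* Exchange(v,I) for the p matroids Ms 0, ..., Ms (p-1); ties in the argmin are broken by
   the (arbitrary, fixed) choice function ch. *)
definition exch :: "nat \<Rightarrow> (nat \<Rightarrow> 'a set \<Rightarrow> bool) \<Rightarrow> ('a set \<Rightarrow> 'a) \<Rightarrow> ('a \<Rightarrow> real)
                     \<Rightarrow> 'a \<Rightarrow> 'a set \<Rightarrow> 'a set" where
  "exch p Ms ch w v I =
     {ch {u \<in> I. Ms j ((I \<union> {v}) - {u}) \<and>
                (\<forall>u'\<in>I. Ms j ((I \<union> {v}) - {u'}) \<longrightarrow> w u \<le> w u')}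
      | j. j < p \<and> \<not> Ms j (I \<union> {v})}"

(* Sample v in C with probability proportional to 1/g v.  Convention for g v = 0
   (weight 1/0 = infinity): sample uniformly among the items of C with g v = 0. *)
definition samp :: "('a \<Rightarrow> real) \<Rightarrow> 'a set \<Rightarrow> 'a pmf" where
  "samp g C = (if \<exists>v\<in>C. g v = 0 then pmf_of_set {v \<in> C. g v = 0}
               else embed_pmf (\<lambda>v. if v \<in> C then (1 / g v) / (\<Sum>u\<in>C. 1 / g u) else 0))"

(* state: (I, C, w, K); K = set of all items ever added to I *)
type_synonym 'a st = "'a set \<times> 'a set \<times> ('a \<Rightarrow> real) \<times> 'a set"

definition stepA :: "nat \<Rightarrow> (nat \<Rightarrow> 'a set \<Rightarrow> bool) \<Rightarrow> ('a set \<Rightarrow> 'a) \<Rightarrow> ('a set \<Rightarrow> real)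
                     \<Rightarrow> nat \<Rightarrow> real \<Rightarrow> real \<Rightarrow> 'a st \<Rightarrow> 'a \<Rightarrow> 'a st pmf" where
  "stepA p Ms ch f d \<epsilon> \<alpha> s v' =
     (case s of (I, C, w, K) \<Rightarrow>
       (let C1 = insert v' C;
            C2 = {v \<in> C1. marg f v I \<ge> (1 + \<alpha>) * sum w (exch p Ms ch w v I)}
        in if C2 \<noteq> {} \<and> real (card C2) \<ge> real d / \<epsilon> then
             map_pmf (\<lambda>v. ((I \<union> {v}) - exch p Ms ch w v I, C2 - {v},
                           w(v := marg f v I), insert v K))
                     (samp (\<lambda>v. marg f v I) C2)
           else return_pmf (I, C2, w, K)))"

definition phaseA :: "nat \<Rightarrow> (nat \<Rightarrow> 'a set \<Rightarrow> bool) \<Rightarrow> ('a set \<Rightarrow> 'a) \<Rightarrow> ('a set \<Rightarrow> real)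
                      \<Rightarrow> nat \<Rightarrow> real \<Rightarrow> real \<Rightarrow> 'a list \<Rightarrow> 'a st pmf" where
  "phaseA p Ms ch f d \<epsilon> \<alpha> vs =
     foldl (\<lambda>P v'. bind_pmf P (\<lambda>s. stepA p Ms ch f d \<epsilon> \<alpha> s v'))
           (return_pmf ({}, {}, (\<lambda>_. 0), {})) vs"

definition stepB :: "nat \<Rightarrow> (nat \<Rightarrow> 'a set \<Rightarrow> bool) \<Rightarrow> ('a set \<Rightarrow> 'a) \<Rightarrow> ('a set \<Rightarrow> real)
                     \<Rightarrow> real \<Rightarrow> 'a st \<Rightarrow> 'a \<Rightarrow> 'a st" where
  "stepB p Ms ch f \<alpha> s v =
     (case s of (I, C, w, K) \<Rightarrow>
       (let wv = marg f v I; S = exch p Ms ch w v I; w' = w(v := wv)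
        in if wv \<ge> (1 + \<alpha>) * sum w S then ((I \<union> {v}) - S, C, w', insert v K)
           else (I, C, w', K)))"

definition phaseB :: "nat \<Rightarrow> (nat \<Rightarrow> 'a set \<Rightarrow> bool) \<Rightarrow> ('a set \<Rightarrow> 'a) \<Rightarrow> ('a set \<Rightarrow> real)
                      \<Rightarrow> real \<Rightarrow> 'a list \<Rightarrow> 'a set \<Rightarrow> 'a st \<Rightarrow> 'a st" where
  "phaseB p Ms ch f \<alpha> vs D s =
     (case s of (I, C, w, K) \<Rightarrow>
        foldl (stepB p Ms ch f \<alpha>) s (filter (\<lambda>v. v \<in> C \<and> v \<notin> D) vs))"

definition run :: "nat \<Rightarrow> (nat \<Rightarrow> 'a set \<Rightarrow> bool) \<Rightarrow> ('a set \<Rightarrow> 'a) \<Rightarrow> ('a set \<Rightarrow> real)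
                   \<Rightarrow> nat \<Rightarrow> real \<Rightarrow> real \<Rightarrow> 'a list \<Rightarrow> 'a set \<Rightarrow> 'a st pmf" where
  "run p Ms ch f d \<epsilon> \<alpha> vs D = map_pmf (phaseB p Ms ch f \<alpha> vs D) (phaseA p Ms ch f d \<epsilon> \<alpha> vs)"

end

theory Submission
  imports Defs
begin

lemma embed_ok:
  fixes m :: "'a \<Rightarrow> real"
  assumes fin: "finite C" and ne: "C \<noteq> {}" and pos: "\<forall>v\<in>C. m v > 0"
  defines "S \<equiv> (\<Sum>u\<in>C. 1 / m u)"
  defines "g \<equiv> (\<lambda>v. if v \<in> C then (1 / m v) / S else 0)"
  shows "S > 0" "\<And>x. 0 \<le> g x" "(\<integral>\<^sup>+x. ennreal (g x) \<partial>count_space UNIV) = 1"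
proof -
  show Sp: "S > 0" unfolding S_def using fin ne pos
    by (intro sum_pos) auto
  show "\<And>x. 0 \<le> g x" unfolding g_def using Sp pos by auto
  have "(\<integral>\<^sup>+x. ennreal (g x) \<partial>count_space UNIV) = (\<integral>\<^sup>+x. ennreal (g x) * indicator C x \<partial>count_space UNIV)"
    by (intro nn_integral_cong) (auto simp: g_def split: split_indicator)
  also have "\<dots> = (\<Sum>x\<in>C. ennreal (g x) * emeasure (count_space UNIV) {x})"
    using fin by (subst nn_integral_indicator_finite) auto
  also have "\<dots> = (\<Sum>x\<in>C. ennreal (g x))" by simp
  also have "\<dots> = ennreal (\<Sum>x\<in>C. g x)"
    using Sp pos by (subst sum_ennreal) (auto simp: g_def)
  also have "(\<Sum>x\<in>C. g x) = (\<Sum>x\<in>C. 1 / m x) / S"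
    unfolding g_def by (simp add: sum_divide_distrib)
  also have "\<dots> = 1" using Sp unfolding S_def by simp
  finally show "(\<integral>\<^sup>+x. ennreal (g x) \<partial>count_space UNIV) = 1" by simp
qed

lemma samp_props:
  fixes m :: "'a \<Rightarrow> real"
  assumes fin: "finite C" and ne: "C \<noteq> {}" and nn: "\<forall>v\<in>C. m v \<ge> 0"
    and cd: "real (card (C \<inter> D)) \<le> e * real (card C)"
  shows "set_pmf (samp m C) \<subseteq> C"
    and "measure_pmf.expectation (samp m C) (\<lambda>v. if v \<in> D then m v else 0)
           \<le> e * measure_pmf.expectation (samp m C) m"
proof -
  have "set_pmf (samp m C) \<subseteq> C \<and> measure_pmf.expectation (samp m C) (\<lambda>v. if v \<in> D then m v else 0)
           \<le> e * measure_pmf.expectation (samp m C) m"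
  proof (cases "\<exists>v\<in>C. m v = 0")
    case True
    let ?Z = "{v \<in> C. m v = 0}"
    have Z: "?Z \<noteq> {}" "finite ?Z" using True fin by auto
    have sp: "set_pmf (samp m C) = ?Z" using True Z unfolding samp_def by simp
    have e1: "measure_pmf.expectation (samp m C) (\<lambda>v. if v \<in> D then m v else 0) = 0"
      by (subst integral_measure_pmf_real[where A="{}"]) (auto simp: sp split: if_splits)
    have e2: "measure_pmf.expectation (samp m C) m = 0"
      by (subst integral_measure_pmf_real[where A="{}"]) (auto simp: sp)
    show ?thesis using sp e1 e2 by auto
  next
    case False
    hence pos: "\<forall>v\<in>C. m v > 0" using nn by force
    define S where "S = (\<Sum>u\<in>C. 1 / m u)"
    define g where "g = (\<lambda>v. if v \<in> C then (1 / m v) / S else 0)"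
    note ok = embed_ok[OF fin ne pos, folded S_def, folded g_def]
    have sm: "samp m C = embed_pmf g" using False unfolding samp_def g_def S_def by simp
    have pm: "\<And>x. pmf (samp m C) x = g x" unfolding sm by (rule pmf_embed_pmf) (use ok in \<open>auto simp: g_def\<close>)
    have sp: "set_pmf (samp m C) \<subseteq> C" by (auto simp: set_pmf_eq pm g_def)
    have e1: "measure_pmf.expectation (samp m C) (\<lambda>v. if v \<in> D then m v else 0) = (\<Sum>v\<in>C. (if v \<in> D then m v else 0) * g v)"
      using sp fin by (subst integral_measure_pmf_real[where A=C]) (auto simp: pm)
    also have "\<dots> = (\<Sum>v\<in>C. (if v \<in> D then 1 / S else 0))"
      using pos by (intro sum.cong) (auto simp: g_def)
    also have "\<dots> = real (card (C \<inter> D)) / S"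
      using fin by (simp add: sum.If_cases Int_commute)
    finally have e1: "measure_pmf.expectation (samp m C) (\<lambda>v. if v \<in> D then m v else 0) = real (card (C \<inter> D)) / S" .
    have "measure_pmf.expectation (samp m C) m = (\<Sum>v\<in>C. m v * g v)"
      using sp fin by (subst integral_measure_pmf_real[where A=C]) (auto simp: pm)
    also have "\<dots> = (\<Sum>v\<in>C. 1 / S)"
      using pos by (intro sum.cong) (auto simp: g_def)
    finally have e2: "measure_pmf.expectation (samp m C) m = real (card C) / S" by simp
    have "real (card (C \<inter> D)) / S \<le> e * real (card C) / S"
      using ok(1) cd by (simp add: divide_right_mono)
    thus ?thesis using sp e1 e2 by simp
  qed
  thus "set_pmf (samp m C) \<subseteq> C" "measure_pmf.expectation (samp m C) (\<lambda>v. if v \<in> D then m v else 0)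
           \<le> e * measure_pmf.expectation (samp m C) m" by auto
qed


definition invA :: "'a set \<Rightarrow> 'a list \<Rightarrow> 'a st \<Rightarrow> bool" where
  "invA V xs s = (case s of (I, C, w, K) \<Rightarrow> I \<subseteq> V \<and> C \<subseteq> set xs \<and> K \<subseteq> set xs \<and> C \<inter> K = {} \<and> (\<forall>u. 0 \<le> w u))"

definition hD :: "'a set \<Rightarrow> 'a st \<Rightarrow> real" where
  "hD D s = (case s of (I, C, w, K) \<Rightarrow> sum w (K \<inter> D))"

definition hK :: "'a st \<Rightarrow> real" where
  "hK s = (case s of (I, C, w, K) \<Rightarrow> sum w K)"

lemma marg_nn:
  assumes "monotone_submodular V f" "v \<in> V" "I \<subseteq> V"
  shows "0 \<le> marg f v I"
proof -
  have "f I \<le> f (insert v I)"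
    using assms unfolding monotone_submodular_def by (meson insert_subset subset_insertI)
  thus ?thesis unfolding marg_def by simp
qed

lemma sum_upd_ins:
  fixes w :: "'a \<Rightarrow> real"
  assumes "v \<notin> K" "finite K"
  shows "sum (w(v := x)) (insert v K \<inter> D) = sum w (K \<inter> D) + (if v \<in> D then x else 0)"
    and "sum (w(v := x)) (insert v K) = sum w K + x"
proof -
  have a: "sum (w(v := x)) (K \<inter> D) = sum w (K \<inter> D)"
    using assms by (intro sum.cong) auto
  have b: "sum (w(v := x)) K = sum w K"
    using assms by (intro sum.cong) auto
  have c: "sum (w(v := x)) (insert v K \<inter> D) = (if v \<in> D then x else 0) + sum (w(v := x)) (K \<inter> D)"
    using assms by (cases "v \<in> D") (simp_all add: Int_insert_left)
  show "sum (w(v := x)) (insert v K \<inter> D) = sum w (K \<inter> D) + (if v \<in> D then x else 0)"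
    using a c by (metis add.commute)
  have d: "sum (w(v := x)) (insert v K) = x + sum (w(v := x)) K"
    using assms by simp
  show "sum (w(v := x)) (insert v K) = sum w K + x"
    using b d by linarith
qed

lemma exp_const_add:
  fixes M :: "'b pmf" and c :: real and g :: "'b \<Rightarrow> real"
  assumes "finite (set_pmf M)"
  shows "measure_pmf.expectation M (\<lambda>x. c + g x) = c + measure_pmf.expectation M g"
proof -
  have "measure_pmf.expectation M (\<lambda>x. c + g x) = measure_pmf.expectation M (\<lambda>x. c) + measure_pmf.expectation M g"
    by (intro Bochner_Integration.integral_add) (use assms in \<open>auto intro: integrable_measure_pmf_finite\<close>)
  thus ?thesis by simp
qed

lemma exp_cong:
  fixes M :: "'b pmf"
  assumes "\<And>x. x \<in> set_pmf M \<Longrightarrow> g x = h x"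
  shows "measure_pmf.expectation M g = measure_pmf.expectation M h"
  using assms by (intro integral_cong_AE) (auto simp: AE_measure_pmf_iff)

lemma stepA_lemma:
  assumes ms: "monotone_submodular V f" and inv: "invA V xs s"
    and v'V: "v' \<in> V" and v'n: "v' \<notin> set xs" and xsV: "set xs \<subseteq> V"
    and fD: "finite D" and cD: "card D \<le> d" and ep: "\<epsilon> > 0"
  shows "finite (set_pmf (stepA p Ms ch f d \<epsilon> \<alpha> s v'))"
    and "\<forall>t\<in>set_pmf (stepA p Ms ch f d \<epsilon> \<alpha> s v'). invA V (xs @ [v']) t"
    and "measure_pmf.expectation (stepA p Ms ch f d \<epsilon> \<alpha> s v') (hD D)
           \<le> hD D s + \<epsilon> * (measure_pmf.expectation (stepA p Ms ch f d \<epsilon> \<alpha> s v') hK - hK s)"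
proof -
  obtain I C w K where s: "s = (I, C, w, K)" by (cases s) auto
  have I: "I \<subseteq> V" and C: "C \<subseteq> set xs" and K: "K \<subseteq> set xs" and CK: "C \<inter> K = {}"
    and wn: "\<forall>u. 0 \<le> w u"
    using inv unfolding s invA_def by auto
  have fK: "finite K" using K finite_subset by blast
  define C2 where "C2 = {v \<in> insert v' C. marg f v I \<ge> (1 + \<alpha>) * sum w (exch p Ms ch w v I)}"
  have C2s: "C2 \<subseteq> insert v' C" unfolding C2_def by auto
  have fC2: "finite C2" using C2s C by (meson List.finite_set finite_insert finite_subset)
  have C2K: "C2 \<inter> K = {}" using C2s CK K v'n by auto
  have C2V: "C2 \<subseteq> V" using C2s C xsV v'V by auto
  define F where "F = (\<lambda>v. ((I \<union> {v}) - exch p Ms ch w v I, C2 - {v},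
                           w(v := marg f v I), insert v K))"
  have steq: "stepA p Ms ch f d \<epsilon> \<alpha> s v' = (if C2 \<noteq> {} \<and> real (card C2) \<ge> real d / \<epsilon> then
      map_pmf F (samp (\<lambda>v. marg f v I) C2) else return_pmf (I, C2, w, K))"
    unfolding s by (simp only: stepA_def Let_def prod.case C2_def F_def)
  have "finite (set_pmf (stepA p Ms ch f d \<epsilon> \<alpha> s v')) \<and>
        (\<forall>t\<in>set_pmf (stepA p Ms ch f d \<epsilon> \<alpha> s v'). invA V (xs @ [v']) t) \<and>
        measure_pmf.expectation (stepA p Ms ch f d \<epsilon> \<alpha> s v') (hD D)
           \<le> hD D s + \<epsilon> * (measure_pmf.expectation (stepA p Ms ch f d \<epsilon> \<alpha> s v') hK - hK s)"
  proof (cases "C2 \<noteq> {} \<and> real (card C2) \<ge> real d / \<epsilon>")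
    case True
    have st: "stepA p Ms ch f d \<epsilon> \<alpha> s v' = map_pmf F (samp (\<lambda>v. marg f v I) C2)"
      using True steq by simp
    have nn: "\<forall>v\<in>C2. marg f v I \<ge> 0" using marg_nn[OF ms _ I] C2V by blast
    have "real (card (C2 \<inter> D)) \<le> real (card D)"
      using fD by (simp add: card_mono)
    also have "\<dots> \<le> real d" using cD by simp
    also have "\<dots> \<le> \<epsilon> * real (card C2)" using True ep by (simp add: field_simps)
    finally have cd: "real (card (C2 \<inter> D)) \<le> \<epsilon> * real (card C2)" .
    note sp = samp_props[OF fC2 _ nn cd]
    have fs: "finite (set_pmf (samp (\<lambda>v. marg f v I) C2))" using sp(1) True fC2 finite_subset by blast
    have fin: "finite (set_pmf (stepA p Ms ch f d \<epsilon> \<alpha> s v'))" using fs st by simp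
    have invs: "\<forall>t\<in>set_pmf (stepA p Ms ch f d \<epsilon> \<alpha> s v'). invA V (xs @ [v']) t"
    proof
      fix t assume "t \<in> set_pmf (stepA p Ms ch f d \<epsilon> \<alpha> s v')"
      then obtain v where v: "v \<in> C2" and t: "t = F v" using st sp(1) True by auto
      have "0 \<le> marg f v I" using nn v by auto
      hence w': "\<forall>u. 0 \<le> (w(v := marg f v I)) u" using wn by auto
      have a1: "(I \<union> {v}) - exch p Ms ch w v I \<subseteq> V" using v C2V I by auto
      have a2: "C2 - {v} \<subseteq> set (xs @ [v'])" using C2s C by auto
      have a3: "insert v K \<subseteq> set (xs @ [v'])" using v C2s C K by auto
      have a4: "(C2 - {v}) \<inter> insert v K = {}" using C2K by auto
      show "invA V (xs @ [v']) t" unfolding t F_def invA_def prod.case using a1 a2 a3 a4 w' by blast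
    qed
    have e1: "measure_pmf.expectation (stepA p Ms ch f d \<epsilon> \<alpha> s v') (hD D)
        = hD D s + measure_pmf.expectation (samp (\<lambda>v. marg f v I) C2) (\<lambda>v. if v \<in> D then marg f v I else 0)"
    proof -
      have "measure_pmf.expectation (stepA p Ms ch f d \<epsilon> \<alpha> s v') (hD D)
          = measure_pmf.expectation (samp (\<lambda>v. marg f v I) C2) (\<lambda>v. hD D s + (if v \<in> D then marg f v I else 0))"
        unfolding st integral_map_pmf
      proof (rule exp_cong)
        fix v assume "v \<in> set_pmf (samp (\<lambda>v. marg f v I) C2)"
        hence "v \<in> C2" using sp(1) True by auto
        hence "v \<notin> K" using C2K by auto
        thus "hD D (F v) = hD D s + (if v \<in> D then marg f v I else 0)"
          unfolding F_def hD_def s prod.case by (rule sum_upd_ins(1)[OF _ fK])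
      qed
      thus ?thesis using exp_const_add[OF fs] by simp
    qed
    have e2: "measure_pmf.expectation (stepA p Ms ch f d \<epsilon> \<alpha> s v') hK
        = hK s + measure_pmf.expectation (samp (\<lambda>v. marg f v I) C2) (\<lambda>v. marg f v I)"
    proof -
      have "measure_pmf.expectation (stepA p Ms ch f d \<epsilon> \<alpha> s v') hK
          = measure_pmf.expectation (samp (\<lambda>v. marg f v I) C2) (\<lambda>v. hK s + marg f v I)"
        unfolding st integral_map_pmf
      proof (rule exp_cong)
        fix v assume "v \<in> set_pmf (samp (\<lambda>v. marg f v I) C2)"
        hence "v \<in> C2" using sp(1) True by auto
        hence "v \<notin> K" using C2K by auto
        thus "hK (F v) = hK s + marg f v I"
          unfolding F_def hK_def s prod.case by (rule sum_upd_ins(2)[OF _ fK])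
      qed
      thus ?thesis using exp_const_add[OF fs] by simp
    qed
    have X: "measure_pmf.expectation (samp (\<lambda>v. marg f v I) C2) (\<lambda>v. if v \<in> D then marg f v I else 0)
       \<le> \<epsilon> * measure_pmf.expectation (samp (\<lambda>v. marg f v I) C2) (\<lambda>v. marg f v I)"
      using sp(2) True by blast
    show ?thesis unfolding e1 e2 using fin invs X by simp
  next
    case False
    have st: "stepA p Ms ch f d \<epsilon> \<alpha> s v' = return_pmf (I, C2, w, K)"
      using False steq by (simp only: if_False)
    have "invA V (xs @ [v']) (I, C2, w, K)" unfolding invA_def using I C2s C K C2K wn by auto
    thus ?thesis unfolding st by (simp add: s hD_def hK_def)
  qed
  thus "finite (set_pmf (stepA p Ms ch f d \<epsilon> \<alpha> s v'))"
    and "\<forall>t\<in>set_pmf (stepA p Ms ch f d \<epsilon> \<alpha> s v'). invA V (xs @ [v']) t"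
    and "measure_pmf.expectation (stepA p Ms ch f d \<epsilon> \<alpha> s v') (hD D)
           \<le> hD D s + \<epsilon> * (measure_pmf.expectation (stepA p Ms ch f d \<epsilon> \<alpha> s v') hK - hK s)"
    by auto
qed


lemma exp_sum:
  fixes M :: "'b pmf" and g :: "'b \<Rightarrow> real"
  assumes "finite (set_pmf M)"
  shows "measure_pmf.expectation M g = (\<Sum>a\<in>set_pmf M. pmf M a * g a)"
  using assms by (subst integral_measure_pmf_real[where A="set_pmf M"]) (auto simp: mult.commute)

lemma phaseA_lemma:
  assumes ms: "monotone_submodular V f"
    and fD: "finite D" and cD: "card D \<le> d" and ep: "\<epsilon> > 0"
  shows "distinct xs \<Longrightarrow> set xs \<subseteq> V \<Longrightarrow>
    finite (set_pmf (phaseA p Ms ch f d \<epsilon> \<alpha> xs)) \<and>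
    (\<forall>s\<in>set_pmf (phaseA p Ms ch f d \<epsilon> \<alpha> xs). invA V xs s) \<and>
    measure_pmf.expectation (phaseA p Ms ch f d \<epsilon> \<alpha> xs) (hD D)
      \<le> \<epsilon> * measure_pmf.expectation (phaseA p Ms ch f d \<epsilon> \<alpha> xs) hK"
proof (induction xs rule: rev_induct)
  case Nil
  show ?case by (simp add: phaseA_def invA_def hD_def hK_def)
next
  case (snoc v' xs)
  let ?P = "phaseA p Ms ch f d \<epsilon> \<alpha> xs"
  let ?st = "\<lambda>s. stepA p Ms ch f d \<epsilon> \<alpha> s v'"
  have eq: "phaseA p Ms ch f d \<epsilon> \<alpha> (xs @ [v']) = bind_pmf ?P ?st"
    by (simp add: phaseA_def)
  have dx: "distinct xs" "v' \<notin> set xs" and xV: "set xs \<subseteq> V" "v' \<in> V" using snoc.prems by auto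
  note IH = snoc.IH[OF dx(1) xV(1)]
  have fP: "finite (set_pmf ?P)" using IH by blast
  have iP: "\<And>s. s \<in> set_pmf ?P \<Longrightarrow> invA V xs s" using IH by blast
  note SL = stepA_lemma[OF ms iP xV(2) dx(2) xV(1) fD cD ep]
  have fQ: "finite (set_pmf (bind_pmf ?P ?st))" using fP SL(1) by (simp add: set_bind_pmf)
  have iQ: "\<forall>t\<in>set_pmf (bind_pmf ?P ?st). invA V (xs @ [v']) t" using SL(2) by (auto simp: set_bind_pmf)
  have bnd: "\<And>h. measure_pmf.expectation (bind_pmf ?P ?st) h =
      (\<Sum>a\<in>set_pmf ?P. pmf ?P a * measure_pmf.expectation (?st a) h)"
    using fP SL(1) by (subst pmf_expectation_bind[where A="set_pmf ?P"]) auto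
  have "measure_pmf.expectation (bind_pmf ?P ?st) (hD D)
      \<le> (\<Sum>a\<in>set_pmf ?P. pmf ?P a * (hD D a + \<epsilon> * (measure_pmf.expectation (?st a) hK - hK a)))"
    unfolding bnd by (intro sum_mono mult_left_mono SL(3)) auto
  also have "\<dots> = (\<Sum>a\<in>set_pmf ?P. pmf ?P a * hD D a) + \<epsilon> * ((\<Sum>a\<in>set_pmf ?P. pmf ?P a * measure_pmf.expectation (?st a) hK) - (\<Sum>a\<in>set_pmf ?P. pmf ?P a * hK a))"
    by (simp add: algebra_simps sum.distrib sum_subtractf sum_distrib_left)
  also have "\<dots> = measure_pmf.expectation ?P (hD D) + \<epsilon> * (measure_pmf.expectation (bind_pmf ?P ?st) hK - measure_pmf.expectation ?P hK)"
    using fP by (simp add: exp_sum bnd)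
  also have "\<dots> \<le> \<epsilon> * measure_pmf.expectation (bind_pmf ?P ?st) hK"
    using IH by (simp add: algebra_simps)
  finally show ?case using fQ iQ eq by simp
qed

lemma phaseB_lemma:
  assumes ms: "monotone_submodular V f"
  shows "I \<subseteq> V \<Longrightarrow> C \<subseteq> V \<Longrightarrow> (\<forall>u. 0 \<le> w u) \<Longrightarrow> set L \<subseteq> C - D \<Longrightarrow>
    foldl (stepB p Ms ch f \<alpha>) (I, C, w, K) L = (I', C', w', K') \<Longrightarrow>
    C' = C \<and> I' \<subseteq> V \<and> (\<forall>u. 0 \<le> w' u) \<and> K \<subseteq> K' \<and> K' \<subseteq> K \<union> set L \<and> (\<forall>u. u \<notin> set L \<longrightarrow> w' u = w u)"
proof (induction L arbitrary: I w K)
  case Nil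
  thus ?case by simp
next
  case (Cons v L)
  have vC: "v \<in> C" "v \<notin> D" using Cons.prems(4) by auto
  have vV: "v \<in> V" using vC Cons.prems(2) by auto
  have m0: "0 \<le> marg f v I" using marg_nn[OF ms vV Cons.prems(1)] .
  define S where "S = exch p Ms ch w v I"
  show ?case
  proof (cases "marg f v I \<ge> (1 + \<alpha>) * sum w S")
    case True
    have st: "stepB p Ms ch f \<alpha> (I, C, w, K) v = ((I \<union> {v}) - S, C, w(v := marg f v I), insert v K)"
      using True unfolding stepB_def S_def Let_def by simp
    have r: "foldl (stepB p Ms ch f \<alpha>) ((I \<union> {v}) - S, C, w(v := marg f v I), insert v K) L = (I', C', w', K')"
      using Cons.prems(5) st by simp
    have "(I \<union> {v}) - S \<subseteq> V" using Cons.prems(1) vV by auto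
    moreover have "\<forall>u. 0 \<le> (w(v := marg f v I)) u" using Cons.prems(3) m0 by auto
    moreover have "set L \<subseteq> C - D" using Cons.prems(4) by auto
    ultimately have H: "C' = C \<and> I' \<subseteq> V \<and> (\<forall>u. 0 \<le> w' u) \<and> insert v K \<subseteq> K' \<and> K' \<subseteq> insert v K \<union> set L \<and> (\<forall>u. u \<notin> set L \<longrightarrow> w' u = (w(v := marg f v I)) u)"
      using Cons.IH[OF _ Cons.prems(2) _ _ r] by blast
    thus ?thesis by auto
  next
    case False
    have st: "stepB p Ms ch f \<alpha> (I, C, w, K) v = (I, C, w(v := marg f v I), K)"
      using False unfolding stepB_def S_def Let_def by simp
    have r: "foldl (stepB p Ms ch f \<alpha>) (I, C, w(v := marg f v I), K) L = (I', C', w', K')"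
      using Cons.prems(5) st by simp
    have "\<forall>u. 0 \<le> (w(v := marg f v I)) u" using Cons.prems(3) m0 by auto
    moreover have "set L \<subseteq> C - D" using Cons.prems(4) by auto
    ultimately have H: "C' = C \<and> I' \<subseteq> V \<and> (\<forall>u. 0 \<le> w' u) \<and> K \<subseteq> K' \<and> K' \<subseteq> K \<union> set L \<and> (\<forall>u. u \<notin> set L \<longrightarrow> w' u = (w(v := marg f v I)) u)"
      using Cons.IH[OF Cons.prems(1) Cons.prems(2) _ _ r] by blast
    thus ?thesis by auto
  qed
qed

lemma pointwise:
  assumes ms: "monotone_submodular V f" and sv: "set vs = V" and fD: "finite D"
    and inv: "invA V vs s"
  shows "(case phaseB p Ms ch f \<alpha> vs D s of (I, C, w, K) \<Rightarrow> sum w (K - D))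
           = (case phaseB p Ms ch f \<alpha> vs D s of (I, C, w, K) \<Rightarrow> sum w K) - hD D s"
    and "hK s \<le> (case phaseB p Ms ch f \<alpha> vs D s of (I, C, w, K) \<Rightarrow> sum w K)"
proof -
  obtain I C w K where s: "s = (I, C, w, K)" by (cases s) auto
  have I: "I \<subseteq> V" and C: "C \<subseteq> V" and K: "K \<subseteq> V" and CK: "C \<inter> K = {}"
    and wn: "\<forall>u. 0 \<le> w u"
    using inv sv unfolding s invA_def by auto
  define L where "L = filter (\<lambda>v. v \<in> C \<and> v \<notin> D) vs"
  obtain I' C' w' K' where r: "foldl (stepB p Ms ch f \<alpha>) (I, C, w, K) L = (I', C', w', K')"
    by (cases "foldl (stepB p Ms ch f \<alpha>) (I, C, w, K) L") auto
  have pb: "phaseB p Ms ch f \<alpha> vs D s = (I', C', w', K')"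
    using r unfolding phaseB_def s L_def by simp
  have sL: "set L \<subseteq> C - D" unfolding L_def by auto
  note H = phaseB_lemma[OF ms I C wn sL r]
  have fK: "finite K" using K sv by (metis List.finite_set finite_subset)
  have fK': "finite K'" using H fK by (meson List.finite_set finite_Un finite_subset)
  have KL: "K \<inter> set L = {}" using sL CK by auto
  have weq: "\<forall>u\<in>K. w' u = w u" using H KL by auto
  have KD: "K' \<inter> D = K \<inter> D" using H sL by auto
  have s1: "sum w' K' = sum w' (K' - D) + sum w' (K' \<inter> D)"
    using fK' by (metis add.commute sum.Int_Diff)
  have s2: "sum w' (K' \<inter> D) = sum w (K \<inter> D)"
    unfolding KD using weq by (intro sum.cong) auto
  show "(case phaseB p Ms ch f \<alpha> vs D s of (I, C, w, K) \<Rightarrow> sum w (K - D))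
           = (case phaseB p Ms ch f \<alpha> vs D s of (I, C, w, K) \<Rightarrow> sum w K) - hD D s"
    unfolding pb unfolding s hD_def using s1 s2 by simp
  have "sum w K = sum w' K" using weq by (intro sum.cong) auto
  also have "\<dots> \<le> sum w' K'" using H fK' by (intro sum_mono2) auto
  finally show "hK s \<le> (case phaseB p Ms ch f \<alpha> vs D s of (I, C, w, K) \<Rightarrow> sum w K)"
    unfolding pb unfolding s hK_def by simp
qed

theorem mainTheorem4:
  fixes V :: "'a set" and vs :: "'a list" and f :: "'a set \<Rightarrow> real"
    and p :: nat and Ms :: "nat \<Rightarrow> 'a set \<Rightarrow> bool" and ch :: "'a set \<Rightarrow> 'a"
    and d :: nat and D :: "'a set" and \<epsilon> \<alpha> :: real
  assumes "finite V" and "distinct vs" and "set vs = V"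
    and "monotone_submodular V f"
    and "p \<ge> 1" and "\<forall>j<p. matroid V (Ms j)"
    and "\<forall>S. S \<noteq> {} \<longrightarrow> ch S \<in> S"
    and "D \<subseteq> V" and "card D \<le> d"
    and "\<alpha> > 0" and "\<epsilon> > 0"
  shows "measure_pmf.expectation (run p Ms ch f d \<epsilon> \<alpha> vs D)
           (\<lambda>(I, C, w, K). sum w (K - D))
         \<ge> (1 - \<epsilon>) * measure_pmf.expectation (run p Ms ch f d \<epsilon> \<alpha> vs D)
           (\<lambda>(I, C, w, K). sum w K)"
proof -
  have fD: "finite D" using assms(1,8) finite_subset by blast
  let ?A = "phaseA p Ms ch f d \<epsilon> \<alpha> vs"
  let ?B = "phaseB p Ms ch f \<alpha> vs D"
  let ?f1 = "\<lambda>s. (case ?B s of (I, C, w, K) \<Rightarrow> sum w (K - D))"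
  let ?f2 = "\<lambda>s. (case ?B s of (I, C, w, K) \<Rightarrow> sum w K)"
  note PA = phaseA_lemma[OF assms(4) fD assms(9) assms(11) assms(2)] 
  have fA: "finite (set_pmf ?A)" and iA: "\<forall>s\<in>set_pmf ?A. invA V vs s"
    and eA: "measure_pmf.expectation ?A (hD D) \<le> \<epsilon> * measure_pmf.expectation ?A hK"
    using PA assms(3) by auto
  note pw = pointwise[OF assms(4) assms(3) fD]
  have E1: "measure_pmf.expectation (run p Ms ch f d \<epsilon> \<alpha> vs D) (\<lambda>(I, C, w, K). sum w (K - D))
      = (\<Sum>a\<in>set_pmf ?A. pmf ?A a * ?f1 a)"
    unfolding run_def integral_map_pmf using fA by (simp add: exp_sum)
  have E2: "measure_pmf.expectation (run p Ms ch f d \<epsilon> \<alpha> vs D) (\<lambda>(I, C, w, K). sum w K)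
      = (\<Sum>a\<in>set_pmf ?A. pmf ?A a * ?f2 a)"
    unfolding run_def integral_map_pmf using fA by (simp add: exp_sum)
  define X1 where "X1 = (\<Sum>a\<in>set_pmf ?A. pmf ?A a * ?f1 a)"
  define X2 where "X2 = (\<Sum>a\<in>set_pmf ?A. pmf ?A a * ?f2 a)"
  define XD where "XD = (\<Sum>a\<in>set_pmf ?A. pmf ?A a * hD D a)"
  define XK where "XK = (\<Sum>a\<in>set_pmf ?A. pmf ?A a * hK a)"
  have a: "X1 = X2 - XD"
    unfolding X1_def X2_def XD_def sum_subtractf[symmetric] using iA pw(1) by (intro sum.cong) (auto simp: right_diff_distrib)
  have b: "XD \<le> \<epsilon> * XK"
    using eA fA unfolding XD_def XK_def by (simp add: exp_sum)
  have c: "XK \<le> X2"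
    unfolding XK_def X2_def using iA pw(2) by (intro sum_mono mult_left_mono) auto
  have "\<epsilon> * XK \<le> \<epsilon> * X2" using c assms(11) by simp
  hence "X1 \<ge> (1 - \<epsilon>) * X2" using a b by (simp add: algebra_simps)
  thus ?thesis unfolding E1 E2 X1_def X2_def .
qed

end
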